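(* A finite distributive lattice $\mathcal{L}$ is a tree lattice if and only if it is an honest lattice.
   Context: An element $x$ of $\mathcal{L}$ is join-irreducible if $x = y \vee z$ implies $x = y$ or $x = z$; $J(\mathcal{L})$ is the poset of join-irreducibles with the induced order. $\mathcal{L}$ is a tree lattice if the Hasse diagram of $J(\mathcal{L})$ is a tree. $\mathcal{L}$ is honest if for all $\alpha, \beta \in J(\mathcal{L})$ such that $\alpha$ covers $\beta$ in the poset $J(\mathcal{L})$, $\alpha$ also covers $\beta$ in $\mathcal{L}$ (where $\alpha$ covers $\beta$ means $\alpha > \beta$ and no element lies strictly between them). *)

theory Defs
  imports Main
begin

definition join_irreducible :: "'a::lattice \<Rightarrow> bool" where
  "join_irreducible x \<longleftrightarrow> (\<forall>y z. x = sup y z \<longrightarrow> x = y \<or> x = z)"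

definition JI :: "'a::lattice set" where
  "JI = {x. join_irreducible x}"

definition covers_in :: "'a::order set \<Rightarrow> 'a \<Rightarrow> 'a \<Rightarrow> bool" where
  "covers_in S a b \<longleftrightarrow> a \<in> S \<and> b \<in> S \<and> b < a \<and> \<not> (\<exists>c\<in>S. b < c \<and> c < a)"

definition hasse_adj :: "'a::order set \<Rightarrow> 'a \<Rightarrow> 'a \<Rightarrow> bool" where
  "hasse_adj S x y \<longleftrightarrow> covers_in S x y \<or> covers_in S y x"

definition ugraph_connected :: "'a set \<Rightarrow> ('a \<Rightarrow> 'a \<Rightarrow> bool) \<Rightarrow> bool" where
  "ugraph_connected V E \<longleftrightarrow>
     (\<forall>x\<in>V. \<forall>y\<in>V. (x, y) \<in> {(u, v). u \<in> V \<and> v \<in> V \<and> E u v}\<^sup>*)"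

definition ugraph_has_cycle :: "'a set \<Rightarrow> ('a \<Rightarrow> 'a \<Rightarrow> bool) \<Rightarrow> bool" where
  "ugraph_has_cycle V E \<longleftrightarrow>
     (\<exists>vs. length vs \<ge> 3 \<and> distinct vs \<and> set vs \<subseteq> V \<and>
        (\<forall>i. Suc i < length vs \<longrightarrow> E (vs ! i) (vs ! Suc i)) \<and> E (last vs) (hd vs))"

definition ugraph_tree :: "'a set \<Rightarrow> ('a \<Rightarrow> 'a \<Rightarrow> bool) \<Rightarrow> bool" where
  "ugraph_tree V E \<longleftrightarrow> V \<noteq> {} \<and> ugraph_connected V E \<and> \<not> ugraph_has_cycle V E"

definition tree_lattice :: "'a::lattice itself \<Rightarrow> bool" where
  "tree_lattice _ \<longleftrightarrow> ugraph_tree (JI :: 'a set) (hasse_adj JI)"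

definition honest_lattice :: "'a::lattice itself \<Rightarrow> bool" where
  "honest_lattice _ \<longleftrightarrow>
     (\<forall>a b::'a. covers_in JI a b \<longrightarrow> covers_in UNIV a b)"

end

theory Submission
  imports Defs
begin

lemma cover_below:
  fixes S :: "'a::order set"
  assumes "finite S" "j \<in> S" "a \<in> S" "j < a"
  shows "\<exists>m. j \<le> m \<and> covers_in S a m"
proof -
  have "j \<in> {v\<in>S. v < a}" using assms by auto
  from finite_has_maximal2[OF _ this] assms(1)
  obtain m where m: "m \<in> {v\<in>S. v < a}" "j \<le> m" "\<forall>b\<in>{v\<in>S. v < a}. m \<le> b \<longrightarrow> m = b"
    by auto
  have "covers_in S a m" unfolding covers_in_def using m assms
    using order.strict_implies_order order.strict_trans by blast
  with m show ?thesis by blast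
qed

lemma path_exists:
  fixes S :: "'a::order set"
  assumes fin: "finite S"
  shows "u \<in> S \<Longrightarrow> w \<in> S \<Longrightarrow> w \<le> u \<Longrightarrow> \<exists>ps. ps \<noteq> [] \<and> hd ps = u \<and> last ps = w \<and> distinct ps
     \<and> set ps \<subseteq> S \<and> (\<forall>v\<in>set ps. w \<le> v \<and> v \<le> u) \<and> successively (covers_in S) ps"
proof (induction "card {v\<in>S. v < u}" arbitrary: u rule: less_induct)
  case less
  show ?case
  proof (cases "u = w")
    case True
    then show ?thesis using less by (intro exI[of _ "[u]"]) auto
  next
    case False
    then have "w < u" using less by auto
    then obtain m where m: "w \<le> m" "covers_in S u m"
      using cover_below[OF fin less(3) less(2)] by blast
    have "{v\<in>S. v < m} \<subset> {v\<in>S. v < u}"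
      using m unfolding covers_in_def by auto
    then have "card {v\<in>S. v < m} < card {v\<in>S. v < u}"
      using fin by (simp add: psubset_card_mono)
    moreover have "m \<in> S" using m covers_in_def by auto
    ultimately obtain ps where ps: "ps \<noteq> [] \<and> hd ps = m \<and> last ps = w \<and> distinct ps
     \<and> set ps \<subseteq> S \<and> (\<forall>v\<in>set ps. w \<le> v \<and> v \<le> m) \<and> successively (covers_in S) ps"
      using less(1) less(3) m(1) by blast
    have mu: "m < u" using m covers_in_def by auto
    show ?thesis
      apply (intro exI[of _ "u # ps"])
      using ps mu less(2) \<open>w < u\<close> m(2)
      by (auto simp: successively_Cons intro: order.trans)
  qed
qed

definition ULC :: "'a::order set \<Rightarrow> bool" where
  "ULC S \<longleftrightarrow> (\<forall>a b c. covers_in S a b \<longrightarrow> covers_in S a c \<longrightarrow> b = c)"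

lemma JI_below:
  fixes b :: "'a::{lattice,finite}"
  shows "(\<forall>j\<in>JI. j \<le> x \<longrightarrow> j \<le> b) \<Longrightarrow> x \<le> b"
proof (induction "card {y. y < x}" arbitrary: x rule: less_induct)
  case less
  show ?case
  proof (cases "x \<in> JI")
    case True
    then show ?thesis using less by auto
  next
    case False
    then obtain y z where yz: "x = sup y z" "x \<noteq> y" "x \<noteq> z"
      unfolding JI_def join_irreducible_def by auto
    have yx: "y < x" "z < x" using yz by (auto simp: less_le)
    have "{v. v < y} \<subseteq> {y. y < x}" using yx by (auto intro: order.strict_trans)
    moreover have "y \<in> {y. y < x}" "y \<notin> {v. v < y}" using yx by auto
    ultimately have "{v. v < y} \<subset> {y. y < x}" by blast
    then have "card {v. v < y} < card {y. y < x}"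
      by (intro psubset_card_mono) auto
    then have "y \<le> b" using less yx by (meson less.prems order.strict_implies_order order.trans)
    have "{v. v < z} \<subseteq> {y. y < x}" using yx by (auto intro: order.strict_trans)
    moreover have "z \<in> {y. y < x}" "z \<notin> {v. v < z}" using yx by auto
    ultimately have "{v. v < z} \<subset> {y. y < x}" by blast
    then have "card {v. v < z} < card {y. y < x}"
      by (intro psubset_card_mono) auto
    then have "z \<le> b" using less yx by (meson less.prems order.strict_implies_order order.trans)
    then show ?thesis using yz \<open>y \<le> b\<close> by simp
  qed
qed

lemma honest_iff_ULC:
  "honest_lattice TYPE('a::{lattice,finite}) \<longleftrightarrow> ULC (JI :: 'a set)"
proof
  assume h: "honest_lattice TYPE('a)"
  show "ULC (JI :: 'a set)" unfolding ULC_def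
  proof (intro allI impI)
    fix a b c :: 'a
    assume ab: "covers_in JI a b" and ac: "covers_in JI a c"
    show "b = c"
    proof (rule ccontr)
      assume bc: "b \<noteq> c"
      have abU: "covers_in UNIV a b" using h ab unfolding honest_lattice_def by blast
      have "\<not> c \<le> b"
      proof
        assume "c \<le> b" then have "c < b" using bc by auto
        then show False using ac ab unfolding covers_in_def by auto
      qed
      then have "b < sup b c" by (metis less_le sup.cobounded1 sup.cobounded2)
      moreover have "sup b c \<le> a" using ab ac unfolding covers_in_def by auto
      ultimately have "sup b c = a" using abU unfolding covers_in_def by (auto simp: less_le) (metis sup.cobounded1 sup_least)
      moreover have "join_irreducible a" using ab unfolding covers_in_def JI_def by auto
      ultimately have "a = b \<or> a = c" unfolding join_irreducible_def by metis
      then show False using ab ac unfolding covers_in_def by auto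
    qed
  qed
next
  assume u: "ULC (JI :: 'a set)"
  show "honest_lattice TYPE('a)" unfolding honest_lattice_def
  proof (intro allI impI)
    fix a b :: 'a
    assume ab: "covers_in JI a b"
    have "\<not> (b < c \<and> c < a)" for c
    proof
      assume c: "b < c \<and> c < a"
      have "\<forall>j\<in>JI. j \<le> c \<longrightarrow> j \<le> b"
      proof (intro ballI impI)
        fix j assume j: "j \<in> JI" "j \<le> c"
        then have "j < a" using c by auto
        then obtain m where "j \<le> m" "covers_in JI a m"
          using cover_below[of "JI :: 'a set" j a] j ab unfolding covers_in_def by auto
        then show "j \<le> b" using u ab unfolding ULC_def by metis
      qed
      then have "c \<le> b" by (rule JI_below)
      then show False using c by auto
    qed
    then show "covers_in UNIV a b" using ab unfolding covers_in_def by auto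
  qed
qed

lemma hasse_sym: "hasse_adj S x y \<longleftrightarrow> hasse_adj S y x"
  unfolding hasse_adj_def by auto

lemma ULC_connected:
  fixes S :: "'a::order set"
  assumes fin: "finite S" and zS: "z0 \<in> S" and zmin: "\<forall>x\<in>S. z0 \<le> x"
  shows "ugraph_connected S (hasse_adj S)"
proof -
  let ?R = "{(u, v). u \<in> S \<and> v \<in> S \<and> hasse_adj S u v}"
  have main: "x \<in> S \<Longrightarrow> (x, z0) \<in> ?R\<^sup>* \<and> (z0, x) \<in> ?R\<^sup>*" for x
  proof (induction "card {v\<in>S. v < x}" arbitrary: x rule: less_induct)
    case less
    show ?case
    proof (cases "x = z0")
      case True then show ?thesis by auto
    next
      case False
      then have "z0 < x" using zmin less by (auto simp: less_le)
      then obtain m where m: "covers_in S x m"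
        using cover_below[OF fin zS less(2)] by blast
      have "{v\<in>S. v < m} \<subset> {v\<in>S. v < x}"
        using m unfolding covers_in_def by auto
      then have "card {v\<in>S. v < m} < card {v\<in>S. v < x}"
        using fin by (simp add: psubset_card_mono)
      moreover have mS: "m \<in> S" using m covers_in_def by auto
      ultimately have ih: "(m, z0) \<in> ?R\<^sup>* \<and> (z0, m) \<in> ?R\<^sup>*" using less(1) by blast
      have "(x, m) \<in> ?R" "(m, x) \<in> ?R" using m mS less(2) unfolding hasse_adj_def by auto
      then show ?thesis using ih
        by (meson converse_rtrancl_into_rtrancl rtrancl.rtrancl_into_rtrancl)
    qed
  qed
  show ?thesis unfolding ugraph_connected_def
    using main by (meson rtrancl_trans)
qed

lemma ULC_no_cycle:
  fixes S :: "'a::order set"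
  assumes fin: "finite S" and u: "ULC S"
  shows "\<not> ugraph_has_cycle S (hasse_adj S)"
proof
  assume "ugraph_has_cycle S (hasse_adj S)"
  then obtain vs where vs: "length vs \<ge> 3" "distinct vs" "set vs \<subseteq> S"
    "\<forall>i. Suc i < length vs \<longrightarrow> hasse_adj S (vs ! i) (vs ! Suc i)"
    "hasse_adj S (last vs) (hd vs)"
    unfolding ugraph_has_cycle_def by blast
  define n where "n = length vs"
  have ne: "vs \<noteq> []" using vs(1) by auto
  have lh: "hasse_adj S (vs ! (n - 1)) (vs ! 0)"
    using vs(5) ne by (simp add: last_conv_nth hd_conv_nth n_def)
  obtain v where v: "v \<in> set vs" "\<forall>b\<in>set vs. v \<le> b \<longrightarrow> v = b"
    using finite_has_maximal[of "set vs"] ne by auto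
  obtain k where k: "k < n" "vs ! k = v" using v(1) by (auto simp: in_set_conv_nth n_def)
  define p where "p = (if k = 0 then n - 1 else k - 1)"
  define q where "q = (if k = n - 1 then 0 else k + 1)"
  have pn: "p < n" and qn: "q < n" using k vs(1) by (auto simp: p_def q_def n_def)
  have Ep: "hasse_adj S (vs ! p) v"
  proof (cases "k = 0")
    case True then show ?thesis using lh k by (simp add: p_def)
  next
    case False
    then have "Suc (k - 1) < length vs" "Suc (k - 1) = k" using k by (auto simp: n_def)
    then show ?thesis using vs(4) k False by (metis p_def)
  qed
  have Eq: "hasse_adj S v (vs ! q)"
    using lh vs(4) k by (cases "k = n - 1") (auto simp: q_def n_def)
  have inp: "vs ! p \<in> set vs" and inq: "vs ! q \<in> set vs" using pn qn by (auto simp: n_def)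
  have "covers_in S v (vs ! p)"
    using Ep v(2) inp unfolding hasse_adj_def covers_in_def by (auto simp: less_le)
  moreover have "covers_in S v (vs ! q)"
    using Eq v(2) inq unfolding hasse_adj_def covers_in_def by (auto simp: less_le)
  ultimately have "vs ! p = vs ! q" using u unfolding ULC_def by blast
  then have "p = q" using vs(2) pn qn by (simp add: nth_eq_iff_index_eq n_def)
  moreover have "p \<noteq> q" using k vs(1) by (auto simp: p_def q_def n_def)
  ultimately show False by simp
qed

lemma tree_ULC:
  fixes S :: "'a::order set"
  assumes fin: "finite S" and zS: "z0 \<in> S" and zmin: "\<forall>x\<in>S. z0 \<le> x"
    and nc: "\<not> ugraph_has_cycle S (hasse_adj S)"
  shows "ULC S"
  unfolding ULC_def
proof (intro allI impI, rule ccontr)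
  fix x y z
  assume xy: "covers_in S x y" and xz: "covers_in S x z" and yz: "y \<noteq> z"
  have S: "x \<in> S" "y \<in> S" "z \<in> S" "y < x" "z < x" using xy xz covers_in_def by auto
  let ?D = "{w\<in>S. w \<le> y \<and> w \<le> z}"
  have "z0 \<in> ?D" using zS zmin S by auto
  then obtain w where w: "w \<in> ?D" "\<forall>b\<in>?D. w \<le> b \<longrightarrow> w = b"
    using finite_has_maximal[of ?D] fin by auto
  have wy: "w \<noteq> y"
  proof
    assume "w = y" then have "y < z" using w yz by (auto simp: less_le)
    then show False using xy S unfolding covers_in_def by auto
  qed
  have wz: "w \<noteq> z"
  proof
    assume "w = z" then have "z < y" using w yz by (auto simp: less_le)
    then show False using xz S unfolding covers_in_def by auto
  qed
  obtain ps where ps: "ps \<noteq> []" "hd ps = y" "last ps = w" "distinct ps"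
     "set ps \<subseteq> S" "\<forall>v\<in>set ps. w \<le> v \<and> v \<le> y" "successively (covers_in S) ps"
    using path_exists[OF fin, of y w] S w by auto
  obtain qs where qs: "qs \<noteq> []" "hd qs = z" "last qs = w" "distinct qs"
     "set qs \<subseteq> S" "\<forall>v\<in>set qs. w \<le> v \<and> v \<le> z" "successively (covers_in S) qs"
    using path_exists[OF fin, of z w] S w by auto
  define qs' where "qs' = butlast qs"
  have qsd: "qs = qs' @ [w]" using qs unfolding qs'_def by (metis append_butlast_last_id)
  have qs'ne: "qs' \<noteq> []" using qsd qs(2) wz by auto
  have hq: "hd qs' = z" using qsd qs(2) qs'ne by auto
  have psl: "length ps \<ge> 2"
  proof (rule ccontr)
    assume "\<not> length ps \<ge> 2"
    then have "length ps = 1" using ps(1) by (cases ps) (auto simp: not_le)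
    then obtain a where "ps = [a]" by (cases ps) auto
    then show False using ps wy by auto
  qed
  have wq': "w \<notin> set qs'" using qs(4) qsd by auto
  have dq': "distinct qs'" using qs(4) qsd by auto
  have sq: "successively (covers_in S) qs'" "covers_in S (last qs') w"
    using qs(7) qsd qs'ne by (auto simp: successively_append_iff)
  define vs where "vs = x # ps @ rev qs'"
  have "ugraph_has_cycle S (hasse_adj S)"
    unfolding ugraph_has_cycle_def
  proof (intro exI[of _ vs] conjI)
    show "3 \<le> length vs" using psl qs'ne by (simp add: vs_def)
    have xps: "x \<notin> set ps" using ps(6) S by (auto simp: less_le_not_le)
    have xqs: "x \<notin> set qs'" using qs(6) S qsd by (auto simp: less_le_not_le)
    have disj: "set ps \<inter> set qs' = {}"
    proof (rule ccontr)
      assume "set ps \<inter> set qs' \<noteq> {}"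
      then obtain v where v: "v \<in> set ps" "v \<in> set qs'" by auto
      then have "v \<in> ?D" "w \<le> v" using ps qs qsd by auto
      then have "w = v" using w by blast
      then show False using v wq' by simp
    qed
    show "distinct vs" using xps xqs disj ps(4) dq' by (auto simp: vs_def)
    show "set vs \<subseteq> S" using S ps(5) qs(5) qsd by (auto simp: vs_def)
    have "successively (hasse_adj S) vs"
      unfolding vs_def
      using ps sq qs'ne xy
      by (auto simp: successively_Cons successively_append_iff hasse_adj_def hd_append
               last_rev hd_rev intro: successively_mono)
    then show "\<forall>i. Suc i < length vs \<longrightarrow> hasse_adj S (vs ! i) (vs ! Suc i)"
      by (simp add: successively_conv_nth)
    show "hasse_adj S (last vs) (hd vs)"
      using qs'ne hq xz by (simp add: vs_def last_rev hasse_adj_def)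
  qed
  then show False using nc by simp
qed

theorem mainTheorem4:
  shows "tree_lattice TYPE('a::{distrib_lattice, finite}) \<longleftrightarrow> honest_lattice TYPE('a)"
proof -
  define z0 :: 'a where "z0 = Inf_fin UNIV"
  have zmin: "\<forall>x. z0 \<le> x" unfolding z0_def by (simp add: Inf_fin.coboundedI)
  have zJI: "z0 \<in> JI" unfolding JI_def join_irreducible_def
  proof (intro CollectI allI impI)
    fix y z assume "z0 = sup y z"
    then have "y \<le> z0" by simp
    then show "z0 = y \<or> z0 = z" using zmin by (simp add: order.antisym)
  qed
  have fin: "finite (JI :: 'a set)" by simp
  have "tree_lattice TYPE('a) \<longleftrightarrow> ULC (JI :: 'a set)"
    unfolding tree_lattice_def ugraph_tree_def
    using ULC_connected[OF fin zJI] ULC_no_cycle[OF fin] tree_ULC[OF fin zJI] zmin zJI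
    by blast
  then show ?thesis using honest_iff_ULC by blast
qed

end
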